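(* Let $F$ be Thompson's group and let $x_0,x_1\in F$ be its standard generators (defined in the context). Let $g\in F$ and let $H=\langle (x_0x_1)^g\rangle$, where $(x_0x_1)^g=g^{-1}x_0x_1g$. Then there exist $f\in H$ and $m,n\in\mathbb{N}$ such that $f$ has the pairs of branches $0^m10\rightarrow 1^n0$ and $0^m11\rightarrow 1^{n+1}0$.
   Context: Thompson's group $F$ is the group of all piecewise linear homeomorphisms of $[0,1]$ with finitely many breakpoints, all at finite dyadic fractions, and all slopes integer powers of $2$. Composition is from left to right: $fg$ means first apply $f$, then $g$; and $a^g=g^{-1}ag$. Writing points of $(0,1)$ as binary expansions $.s$ with $s$ an infinite binary word, $x_0$ maps $.00\alpha\mapsto .0\alpha$, $.01\alpha\mapsto .10\alpha$, $.1\alpha\mapsto .11\alpha$, and $x_1$ maps $.0\alpha\mapsto .0\alpha$, $.100\alpha\mapsto .10\alpha$, $.101\alpha\mapsto .110\alpha$, $.11\alpha\mapsto .111\alpha$ (for every infinite binary word $\alpha$). For finite binary words $u,v$, an element $f\in F$ has the pair of branches $u\rightarrow v$ if $f(.u\alpha)=.v\alpha$ for every infinite binary word $\alpha$ (i.e. $f$ maps the dyadic interval $[.u,.u1^{\mathbb{N}}]$ linearly onto $[.v,.v1^{\mathbb{N}}]$). $0^m$ denotes the word of $m$ zeros, $1^n$ the word of $n$ ones. *)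

theory Defs
  imports Complex_Main
begin

text \<open>Infinite binary words are functions nat => bool (False = digit 0, True = digit 1);
  finite words are bool lists. The point .s of [0,1] for an infinite word s.\<close>

definition bin_val :: "(nat \<Rightarrow> bool) \<Rightarrow> real" where
  "bin_val s = (\<Sum>i. (if s i then 1 else 0) / 2 ^ (Suc i))"

definition wconc :: "bool list \<Rightarrow> (nat \<Rightarrow> bool) \<Rightarrow> (nat \<Rightarrow> bool)" where
  "wconc u \<alpha> = (\<lambda>i. if i < length u then u ! i else \<alpha> (i - length u))"

definition dyadic :: "real \<Rightarrow> bool" where
  "dyadic x \<longleftrightarrow> (\<exists>a::int. \<exists>k::nat. x = of_int a / 2 ^ k)"

text \<open>Thompson's group F, realised as functions real => real that restrict to a PL
  homeomorphism of [0,1] (finitely many dyadic breakpoints, slopes integer powers of 2)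
  and are the identity outside [0,1].\<close>
definition thompson_F :: "(real \<Rightarrow> real) set" where
  "thompson_F = {f. bij_betw f {0..1} {0..1} \<and> (\<forall>x. x \<notin> {0..1} \<longrightarrow> f x = x) \<and>
     (\<exists>bs :: real list. length bs \<ge> 2 \<and> hd bs = 0 \<and> last bs = 1 \<and>
        sorted_wrt (<) bs \<and> (\<forall>b\<in>set bs. dyadic b) \<and>
        (\<forall>i < length bs - 1. \<exists>k::int. \<forall>x\<in>{bs ! i .. bs ! Suc i}.
            f x = f (bs ! i) + (2::real) powi k * (x - bs ! i)))}"

definition x0 :: "real \<Rightarrow> real" where
  "x0 x = (if x < 0 \<or> x > 1 then x
           else if x \<le> 1/4 then 2 * x
           else if x \<le> 1/2 then x + 1/4
           else x / 2 + 1/2)"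

definition x1 :: "real \<Rightarrow> real" where
  "x1 x = (if x < 0 \<or> x > 1 then x
           else if x \<le> 1/2 then x
           else if x \<le> 5/8 then 2 * x - 1/2
           else if x \<le> 3/4 then x + 1/8
           else x / 2 + 1/2)"

text \<open>Group product with left-to-right convention: (f g) means first f then g.\<close>
definition tmult :: "(real \<Rightarrow> real) \<Rightarrow> (real \<Rightarrow> real) \<Rightarrow> (real \<Rightarrow> real)" where
  "tmult f g = g \<circ> f"

definition tconj :: "(real \<Rightarrow> real) \<Rightarrow> (real \<Rightarrow> real) \<Rightarrow> (real \<Rightarrow> real)" where
  "tconj a g = tmult (tmult (inv g) a) g"

definition tpow :: "(real \<Rightarrow> real) \<Rightarrow> int \<Rightarrow> (real \<Rightarrow> real)" where
  "tpow h k = (if k \<ge> 0 then h ^^ nat k else (inv h) ^^ nat (- k))"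

definition cyclic_sub :: "(real \<Rightarrow> real) \<Rightarrow> (real \<Rightarrow> real) set" where
  "cyclic_sub h = range (tpow h)"

definition has_branch :: "(real \<Rightarrow> real) \<Rightarrow> bool list \<Rightarrow> bool list \<Rightarrow> bool" where
  "has_branch f u v \<longleftrightarrow> (\<forall>\<alpha>. f (bin_val (wconc u \<alpha>)) = bin_val (wconc v \<alpha>))"

end

theory Submission imports Defs begin

lemma bv_summable: "summable (\<lambda>i. (if s i then 1 else 0) / (2::real) ^ (Suc i))"
proof (rule summable_comparison_test[where g="\<lambda>i. (1/2::real) ^ Suc i"])
  show "\<exists>N. \<forall>n\<ge>N. norm ((if s n then 1 else 0) / (2::real) ^ (Suc n)) \<le> (1/2) ^ Suc n"
    by (auto simp: power_divide)
  show "summable (\<lambda>i. (1/2::real) ^ Suc i)"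
    using summable_geometric[of "1/2::real"] summable_mult[of _ "1/2::real"] by simp
qed

lemma bv_head: "bin_val s = (if s 0 then 1/2 else 0) + bin_val (\<lambda>i. s (Suc i)) / 2"
proof -
  have "(\<Sum>n. (if s (Suc n) then 1 else 0) / (2::real) ^ (Suc (Suc n))) =
        bin_val s - (if s 0 then 1/2 else 0)"
    unfolding bin_val_def using suminf_split_head[OF bv_summable[of s]] by simp
  moreover have "(\<Sum>n. (if s (Suc n) then 1 else 0) / (2::real) ^ (Suc (Suc n))) =
        bin_val (\<lambda>i. s (Suc i)) / 2"
    unfolding bin_val_def using suminf_divide[OF bv_summable[of "\<lambda>i. s (Suc i)"], of 2]
    by (simp add: field_simps)
  ultimately show ?thesis by simp
qed

lemma bv_range: "0 \<le> bin_val s \<and> bin_val s \<le> 1"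
proof
  show "0 \<le> bin_val s" unfolding bin_val_def
    by (rule suminf_nonneg[OF bv_summable]) simp
  have g: "(\<lambda>i. (1/2::real) ^ Suc i) sums 1"
    using sums_mult[OF geometric_sums[of "1/2::real"], of "1/2"] by simp
  have "bin_val s \<le> (\<Sum>i. (1/2::real) ^ Suc i)" unfolding bin_val_def
    by (rule suminf_le[OF _ bv_summable sums_summable[OF g]]) (simp add: power_divide)
  then show "bin_val s \<le> 1" using sums_unique[OF g] by simp
qed

lemma wconc_cons: "(\<lambda>i. wconc (b # u) \<alpha> (Suc i)) = wconc u \<alpha>"
  by (auto simp: wconc_def fun_eq_iff)

lemma wconc_cons0: "wconc (b # u) \<alpha> 0 = b"
  by (simp add: wconc_def)

lemma bv_cons: "bin_val (wconc (b # u) \<alpha>) = (if b then 1/2 else 0) + bin_val (wconc u \<alpha>) / 2"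
  using bv_head[of "wconc (b # u) \<alpha>"] by (simp add: wconc_cons wconc_cons0)

lemma wconc_nil: "wconc [] \<alpha> = \<alpha>" by (simp add: wconc_def)

lemma bv_zeros: "bin_val (wconc (replicate m False @ w) \<alpha>) = bin_val (wconc w \<alpha>) / 2 ^ m"
  by (induction m) (simp_all add: bv_cons)

lemma bv_ones: "bin_val (wconc (replicate n True @ w) \<alpha>) = 1 - (1 - bin_val (wconc w \<alpha>)) / 2 ^ n"
  by (induction n) (simp_all add: bv_cons field_simps)

lemma bv_L1: "bin_val (wconc (replicate m False @ [True, False]) \<alpha>) = (2 + bin_val \<alpha>) / (4 * 2 ^ m)"
  by (simp add: bv_zeros bv_cons wconc_nil field_simps)
lemma bv_L2: "bin_val (wconc (replicate m False @ [True, True]) \<alpha>) = (3 + bin_val \<alpha>) / (4 * 2 ^ m)"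
  by (simp add: bv_zeros bv_cons wconc_nil field_simps)
lemma bv_R: "bin_val (wconc (replicate n True @ [False]) \<alpha>) = 1 - (2 - bin_val \<alpha>) / (2 * 2 ^ n)"
  by (simp add: bv_ones bv_cons wconc_nil field_simps)

definition hh :: "real \<Rightarrow> real" where "hh = x1 \<circ> x0"

lemma hh_a: "0 \<le> z \<Longrightarrow> z \<le> 3/8 \<Longrightarrow> hh z = 2 * z"
  by (auto simp: hh_def x0_def x1_def)
lemma hh_b: "3/8 \<le> z \<Longrightarrow> z \<le> 1/2 \<Longrightarrow> hh z = z + 3/8"
  by (auto simp: hh_def x0_def x1_def)
lemma hh_c: "1/2 \<le> z \<Longrightarrow> z \<le> 1 \<Longrightarrow> hh z = z/4 + 3/4"
  by (auto simp: hh_def x0_def x1_def field_simps)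

lemma hh_iter0: "0 \<le> z \<Longrightarrow> 2 ^ j * z \<le> 1/2 \<Longrightarrow> (hh ^^ j) z = 2 ^ j * z"
proof (induction j)
  case 0 then show ?case by simp
next
  case (Suc j)
  have "2 ^ j * z \<le> 1/4" using Suc.prems by simp
  then show ?case using Suc by (simp add: hh_a)
qed

lemma hh_iter1: "1/2 \<le> y \<Longrightarrow> y \<le> 1 \<Longrightarrow> (hh ^^ r) y = 1 - (1 - y) / 4 ^ r"
proof (induction r)
  case 0 then show ?case by simp
next
  case (Suc r)
  have "(1 - y) / 4 ^ r \<le> 1/2" using Suc.prems
  proof -
    have "(1 - y) / 4 ^ r \<le> (1 - y) / 1"
      using Suc.prems by (intro divide_left_mono) auto
    then have "(1 - y) / 4 ^ r \<le> 1 - y" by simp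
    then show ?thesis using Suc.prems by linarith
  qed
  moreover have "0 \<le> (1 - y) / 4 ^ r" using Suc.prems by simp
  ultimately have "hh (1 - (1 - y) / 4 ^ r) = (1 - (1 - y) / 4 ^ r)/4 + 3/4"
    by (intro hh_c) auto
  moreover have "(hh ^^ Suc r) y = hh (1 - (1 - y) / 4 ^ r)" using Suc by simp
  ultimately show ?case by (simp add: field_simps)
qed


lemma F_struct:
  assumes "g \<in> thompson_F"
  shows "bij g \<and> (\<exists>a::int. \<exists>\<delta>>0. \<forall>x\<in>{0..\<delta>}. g x = 2 powi a * x) \<and>
         (\<exists>b::int. \<exists>\<eta>>0. \<forall>y\<in>{1-\<eta>..1}. g y = 1 - 2 powi b * (1 - y))"
proof -
  have bb: "bij_betw g {0..1} {0..1}" and outs: "\<forall>x. x \<notin> {0..1} \<longrightarrow> g x = x"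
    and ex: "\<exists>bs :: real list. length bs \<ge> 2 \<and> hd bs = 0 \<and> last bs = 1 \<and>
        sorted_wrt (<) bs \<and> (\<forall>b\<in>set bs. dyadic b) \<and>
        (\<forall>i < length bs - 1. \<exists>k::int. \<forall>x\<in>{bs ! i .. bs ! Suc i}.
            g x = g (bs ! i) + (2::real) powi k * (x - bs ! i))"
    using assms unfolding thompson_F_def mem_Collect_eq by (fact conjunct1, fact conjunct1[OF conjunct2], fact conjunct2[OF conjunct2])
  obtain bs :: "real list" where
    L2: "length bs \<ge> 2" and hd: "hd bs = 0" and lst: "last bs = 1" and srt: "sorted_wrt (<) bs"
    and pc: "\<forall>i < length bs - 1. \<exists>k::int. \<forall>x\<in>{bs ! i .. bs ! Suc i}.
            g x = g (bs ! i) + (2::real) powi k * (x - bs ! i)"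
    using ex by (elim exE conjE) (rule that; assumption)
  define L where "L = length bs"
  have pcL: "\<And>i. i < L - 1 \<Longrightarrow> \<exists>k::int. \<forall>x\<in>{bs ! i .. bs ! Suc i}.
            g x = g (bs ! i) + (2::real) powi k * (x - bs ! i)" using pc L_def by simp
  have ne: "bs \<noteq> []" using L2 by auto
  have b0: "bs ! 0 = 0" using hd ne by (simp add: hd_conv_nth)
  have bL: "bs ! (L - 1) = 1" using lst ne by (simp add: last_conv_nth L_def)
  have lt: "\<And>i j. i < j \<Longrightarrow> j < L \<Longrightarrow> bs ! i < bs ! j"
    using srt sorted_wrt_nth_less L_def by blast
  have le: "\<And>i j. i \<le> j \<Longrightarrow> j < L \<Longrightarrow> bs ! i \<le> bs ! j"
    using lt by (metis order.order_iff_strict)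
  have pmono: "g u \<le> g v" if hj: "j < L - 1" "bs ! j \<le> u" "u \<le> v" "v \<le> bs ! Suc j" for j u v
  proof -
    from pcL[OF hj(1)] obtain k :: int where k: "\<forall>x\<in>{bs ! j .. bs ! Suc j}. g x = g (bs ! j) + (2::real) powi k * (x - bs ! j)"
      ..
    have "g u = g (bs ! j) + (2::real) powi k * (u - bs ! j)" using k[rule_format, of u] hj by simp
    moreover have "g v = g (bs ! j) + (2::real) powi k * (v - bs ! j)" using k[rule_format, of v] hj by simp
    moreover have "(2::real) powi k * (u - bs ! j) \<le> 2 powi k * (v - bs ! j)"
      using hj by (intro mult_left_mono) auto
    ultimately show ?thesis by simp
  qed
  have mono: "\<forall>x y. 0 \<le> x \<longrightarrow> x \<le> y \<longrightarrow> y \<le> bs ! j \<longrightarrow> g x \<le> g y" if "j < L" for j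
    using that
  proof (induction j)
    case 0
    show ?case
    proof (intro allI impI)
      fix x y :: real assume "0 \<le> x" "x \<le> y" "y \<le> bs ! 0"
      then have "x = y" using b0 by simp
      then show "g x \<le> g y" by simp
    qed
  next
    case (Suc j)
    have IH: "\<forall>x y. 0 \<le> x \<longrightarrow> x \<le> y \<longrightarrow> y \<le> bs ! j \<longrightarrow> g x \<le> g y" using Suc by simp
    have jl: "j < L - 1" using Suc.prems by simp
    have bj0: "0 \<le> bs ! j" using le[of 0 j] b0 Suc.prems by simp
    show ?case
    proof (intro allI impI)
      fix x y assume xy: "0 \<le> x" "x \<le> y" "y \<le> bs ! Suc j"
      show "g x \<le> g y"
      proof (cases "y \<le> bs ! j")
        case True then show ?thesis using IH xy by blast
      next
        case False
        show ?thesis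
        proof (cases "bs ! j \<le> x")
          case True then show ?thesis using pmono[OF jl] xy by blast
        next
          case F2: False
          have "g x \<le> g (bs ! j)" using IH xy F2 by auto
          also have "g (bs ! j) \<le> g y" using pmono[OF jl, of "bs ! j" y] xy False by auto
          finally show ?thesis .
        qed
      qed
    qed
  qed
  have mono01: "g x \<le> g y" if "0 \<le> x" "x \<le> y" "y \<le> 1" for x y
    using mono[of "L - 1"] bL that L2 L_def by auto
  have img: "g ` {0..1} = {0..1}" using bb by (simp add: bij_betw_def)
  have g0: "g 0 = 0"
  proof -
    have "(0::real) \<in> g ` {0..1}" using img by simp
    then obtain y where y: "y \<in> {0..1}" "g y = 0" by (auto simp del: atLeastAtMost_iff)
    have "g 0 \<le> g y" using mono01[of 0 y] y by auto
    moreover have "g 0 \<in> {0..1}" using img by auto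
    ultimately show ?thesis using y by auto
  qed
  have g1: "g 1 = 1"
  proof -
    have "(1::real) \<in> g ` {0..1}" using img by simp
    then obtain y where y: "y \<in> {0..1}" "g y = 1" by (auto simp del: atLeastAtMost_iff)
    have "g y \<le> g 1" using mono01[of y 1] y by auto
    moreover have "g 1 \<in> {0..1}" using img by auto
    ultimately show ?thesis using y by auto
  qed
  have inj01: "inj_on g {0..1}" using bb by (simp add: bij_betw_def)
  have "inj g"
  proof (rule injI)
    fix x y assume e: "g x = g y"
    show "x = y"
    proof (cases "x \<in> {0..1}")
      case True
      then show ?thesis
      proof (cases "y \<in> {0..1}")
        case True then show ?thesis using inj01 e \<open>x \<in> {0..1}\<close> by (meson inj_onD)
      next
        case False
        have "g x \<in> {0..1}" using img \<open>x \<in> {0..1}\<close> by blast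
        moreover have "g y = y" using outs False by blast
        ultimately show ?thesis using e False by simp
      qed
    next
      case False
      have gx: "g x = x" using outs False by blast
      show ?thesis
      proof (cases "y \<in> {0..1}")
        case True
        have "g y \<in> {0..1}" using img True by blast
        then show ?thesis using e gx False by simp
      next
        case F2: False
        then show ?thesis using e gx outs by simp
      qed
    qed
  qed
  moreover have "surj g"
  proof -
    have "z \<in> range g" for z
    proof (cases "z \<in> {0..1}")
      case True then show ?thesis using img by blast
    next
      case False then have "g z = z" using outs by blast
      then show ?thesis by (metis rangeI)
    qed
    then show ?thesis by blast
  qed
  ultimately have bij: "bij g" by (simp add: bij_def)
  have z1: "0 < L - 1" using L2 L_def by simp
  from pcL[OF z1] obtain a :: int where a: "\<forall>x\<in>{bs ! 0 .. bs ! Suc 0}. g x = g (bs ! 0) + (2::real) powi a * (x - bs ! 0)"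
    ..
  have d0: "bs ! Suc 0 > 0" using lt[of 0 1] b0 L2 L_def by simp
  have A: "\<exists>a::int. \<exists>\<delta>>0. \<forall>x\<in>{0..\<delta>}. g x = 2 powi a * x"
  proof (intro exI[of _ a] exI[of _ "bs ! Suc 0"] conjI ballI)
    fix x assume "x \<in> {0 .. bs ! Suc 0}"
    then show "g x = 2 powi a * x" using a[rule_format, of x] b0 g0 by simp
  qed (rule d0)
  have z2: "L - 2 < L - 1" using L2 L_def by simp
  have sL: "Suc (L - 2) = L - 1" using L2 L_def by simp
  from pcL[OF z2] obtain b :: int where b: "\<forall>x\<in>{bs ! (L-2) .. bs ! Suc (L-2)}. g x = g (bs ! (L-2)) + (2::real) powi b * (x - bs ! (L-2))"
    ..
  define p where "p = bs ! (L-2)"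
  have p1: "p < 1" using lt[of "L-2" "L-1"] bL L2 L_def p_def by simp
  have bq: "\<forall>x\<in>{p .. 1}. g x = g p + (2::real) powi b * (x - p)"
  proof
    fix x assume "x \<in> {p .. 1}"
    then show "g x = g p + (2::real) powi b * (x - p)" using b[rule_format, of x] sL bL p_def by simp
  qed
  have gp: "g p = 1 - 2 powi b * (1 - p)" using bq[rule_format, of 1] g1 p1 by simp
  have B: "\<exists>b::int. \<exists>\<eta>>0. \<forall>y\<in>{1-\<eta>..1}. g y = 1 - 2 powi b * (1 - y)"
  proof (intro exI[of _ b] exI[of _ "1 - p"] conjI ballI)
    fix y assume y: "y \<in> {1 - (1 - p) .. 1}"
    then show "g y = 1 - 2 powi b * (1 - y)" using bq[rule_format, of y] gp by (simp add: algebra_simps)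
  qed (use p1 in simp)
  show ?thesis using bij A B by blast
qed


lemma kpow: assumes "bij g" shows "((g \<circ> (hh \<circ> inv g)) ^^ p) = g \<circ> ((hh ^^ p) \<circ> inv g)"
proof (induction p)
  case 0 then show ?case using assms by (simp add: fun_eq_iff bij_is_surj surj_f_inv_f)
next
  case (Suc p)
  have "inv g (g y) = y" for y using assms by (simp add: bij_is_inj)
  then show ?case using Suc by (simp add: fun_eq_iff)
qed

theorem lemma3p1:
  assumes "g \<in> thompson_F"
  shows "\<exists>f \<in> cyclic_sub (tconj (tmult x0 x1) g). \<exists>m n :: nat.
           has_branch f (replicate m False @ [True, False]) (replicate n True @ [False]) \<and>
           has_branch f (replicate m False @ [True, True]) (replicate (Suc n) True @ [False])"
proof -
  obtain a :: int and \<delta> b \<eta> where bij: "bij g" and d: "\<delta> > 0" and ga: "\<forall>x\<in>{0..\<delta>}. g x = 2 powi a * x"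
    and e: "\<eta> > 0" and gb: "\<forall>y\<in>{1-\<eta>..1}. g y = 1 - 2 powi b * (1 - y)"
    using F_struct[OF assms] by blast
  define c :: real where "c = 2 powi a"
  define dd :: real where "dd = 2 powi b"
  have c0: "c > 0" and dd0: "dd > 0" by (simp_all add: c_def dd_def)
  obtain N where N: "(1/2::real) ^ N < \<delta>" using real_arch_pow_inv[OF d] by force
  obtain R where R: "(1/2::real) ^ R < \<eta>" using real_arch_pow_inv[OF e] by force
  define M where "M = N + 1 + nat \<bar>a\<bar>"
  define m where "m = nat (int M - a)"
  define r where "r = R + nat \<bar>b\<bar>"
  define n where "n = nat (int (2*r+1) - b)"
  have M1: "M \<ge> 1" by (simp add: M_def)
  have im: "int M = int m + a" by (simp add: m_def M_def)
  have in_: "int (2*r+1) = int n + b"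
  proof -
    have "int (2*r+1) - b \<ge> 0" unfolding r_def by (simp add: algebra_simps)
    then show ?thesis unfolding n_def by simp
  qed
  have p2M: "(2::real) ^ M = 2 ^ m * c"
  proof -
    have "(2::real) ^ M = 2 powi (int M)" by simp
    also have "\<dots> = 2 powi (int m) * 2 powi a" by (simp add: im power_int_add)
    finally show ?thesis by (simp add: c_def)
  qed
  have p2r: "(2::real) ^ (2*r+1) = 2 ^ n * dd"
  proof -
    have "(2::real) ^ (2*r+1) = 2 powi (int (2*r+1))" by (simp only: power_int_of_nat)
    also have "\<dots> = 2 powi (int n + b)" by (simp only: in_)
    also have "\<dots> = 2 powi (int n) * 2 powi b" by (rule power_int_add) simp
    finally show ?thesis by (simp add: dd_def)
  qed
  have Md: "1 / 2 ^ M < \<delta>"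
  proof -
    have "(1/2::real) ^ M \<le> (1/2) ^ N" by (rule power_decreasing) (auto simp: M_def)
    then show ?thesis using N by (simp add: power_divide)
  qed
  have rd: "1 / 2 ^ (2*r+1) < \<eta>"
  proof -
    have "(1/2::real) ^ (2*r+1) \<le> (1/2) ^ R" by (rule power_decreasing) (auto simp: r_def)
    then show ?thesis using R by (simp add: power_divide)
  qed
  have ginv: "inv g x = x / c" if "0 \<le> x" "x \<le> c * \<delta>" for x
  proof -
    have "x / c \<in> {0..\<delta>}" using that c0 by (auto simp: field_simps)
    then have "g (x / c) = x" using ga c0 by (simp add: c_def)
    then show ?thesis using bij by (simp add: bij_is_inj inv_f_eq)
  qed
  have gnear: "g (1 - v) = 1 - dd * v" if "0 \<le> v" "v \<le> 1 / 2 ^ (2*r+1)" for v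
    using gb[rule_format, of "1 - v"] that rd e by (simp add: dd_def)
  define k where "k = tconj (tmult x0 x1) g"
  have kk: "k = g \<circ> (hh \<circ> inv g)" by (simp add: k_def tconj_def tmult_def hh_def)
  define f where "f = k ^^ (M + r)"
  have fin: "f \<in> cyclic_sub k"
    unfolding cyclic_sub_def f_def by (rule range_eqI[where x="int (M + r)"]) (simp add: tpow_def del: of_nat_add)
  have fe: "f x = g ((hh ^^ (M + r)) (inv g x))" for x
    using kpow[OF bij, of "M + r"] by (simp add: f_def kk)
  have hsplit: "(hh ^^ (M + r)) z = (hh ^^ r) (hh ((hh ^^ (M - 1)) z))" for z
  proof -
    have "M + r = r + Suc (M - 1)" using M1 by simp
    then have "(hh ^^ (M + r)) = (hh ^^ r) \<circ> (hh ^^ Suc (M - 1))" by (simp only: funpow_add)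
    then show ?thesis by (simp del: funpow.simps) (simp only: funpow.simps comp_def)
  qed
  have p2M': "(2::real) ^ M = 2 * 2 ^ (M - 1)" using M1 by (metis Suc_diff_1 less_le_trans zero_less_one power_Suc)
  have key: "f (c * (2 * u) / 2 ^ M) = g ((hh ^^ r) (hh u))" if u: "1/8 \<le> u" "u \<le> 1/2" for u
  proof -
    have "2 * u / 2 ^ M \<le> 1 / 2 ^ M" using u by (simp add: divide_right_mono)
    then have "2 * u / 2 ^ M \<le> \<delta>" using Md by linarith
    then have "c * (2 * u / 2 ^ M) \<le> c * \<delta>" using c0 by (intro mult_left_mono) auto
    then have "c * (2 * u) / 2 ^ M \<le> c * \<delta>" by (simp only: times_divide_eq_right)
    then have "inv g (c * (2 * u) / 2 ^ M) = 2 * u / 2 ^ M"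
      using ginv[of "c * (2 * u) / 2 ^ M"] c0 u by simp
    moreover have "(hh ^^ (M - 1)) (2 * u / 2 ^ M) = u"
    proof -
      have "2 ^ (M - 1) * (2 * u / 2 ^ M) = u" using p2M' by simp
      then show ?thesis using hh_iter0[of "2 * u / 2 ^ M" "M - 1"] u by simp
    qed
    ultimately show ?thesis using fe hsplit by simp
  qed
  have br1: "f ((2 + t) / (4 * 2 ^ m)) = 1 - (2 - t) / (2 * 2 ^ n)" if t: "0 \<le> t" "t \<le> 1" for t
  proof -
    have "(2 + t) / (4 * 2 ^ m) = c * (2 * ((2 + t) / 8)) / 2 ^ M"
      using p2M c0 by (simp add: field_simps)
    then have "f ((2 + t) / (4 * 2 ^ m)) = g ((hh ^^ r) (hh ((2 + t) / 8)))"
      using key[of "(2 + t) / 8"] t by simp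
    also have "hh ((2 + t) / 8) = (2 + t) / 4" using t by (simp add: hh_a)
    also have "(hh ^^ r) ((2 + t) / 4) = 1 - (2 - t) / (4 * 4 ^ r)"
      using hh_iter1[of "(2 + t) / 4" r] t by (simp add: field_simps)
    also have "(4::real) * 4 ^ r = 2 * 2 ^ (2*r+1)" by (simp add: power_mult)
    also have "g (1 - (2 - t) / (2 * 2 ^ (2*r+1))) = 1 - dd * ((2 - t) / (2 * 2 ^ (2*r+1)))"
      using t by (intro gnear) (auto simp: field_simps)
    also have "dd * ((2 - t) / (2 * 2 ^ (2*r+1))) = (2 - t) / (2 * 2 ^ n)"
      using dd0 by (simp only: p2r) (simp add: field_simps)
    finally show ?thesis .
  qed
  have br2: "f ((3 + t) / (4 * 2 ^ m)) = 1 - (2 - t) / (2 * 2 ^ Suc n)" if t: "0 \<le> t" "t \<le> 1" for t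
  proof -
    have "(3 + t) / (4 * 2 ^ m) = c * (2 * ((3 + t) / 8)) / 2 ^ M"
      using p2M c0 by (simp add: field_simps)
    then have "f ((3 + t) / (4 * 2 ^ m)) = g ((hh ^^ r) (hh ((3 + t) / 8)))"
      using key[of "(3 + t) / 8"] t by simp
    also have "hh ((3 + t) / 8) = (6 + t) / 8" using t by (simp add: hh_b)
    also have "(hh ^^ r) ((6 + t) / 8) = 1 - (2 - t) / (8 * 4 ^ r)"
      using hh_iter1[of "(6 + t) / 8" r] t by (simp add: field_simps)
    also have "(8::real) * 4 ^ r = 4 * 2 ^ (2*r+1)" by (simp add: power_mult)
    also have "g (1 - (2 - t) / (4 * 2 ^ (2*r+1))) = 1 - dd * ((2 - t) / (4 * 2 ^ (2*r+1)))"
      using t by (intro gnear) (auto simp: field_simps)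
    also have "dd * ((2 - t) / (4 * 2 ^ (2*r+1))) = (2 - t) / (2 * 2 ^ Suc n)"
      using dd0 by (simp only: p2r) (simp add: field_simps)
    finally show ?thesis .
  qed
  have "has_branch f (replicate m False @ [True, False]) (replicate n True @ [False])"
    unfolding has_branch_def bv_L1 bv_R using br1 bv_range by blast
  moreover have "has_branch f (replicate m False @ [True, True]) (replicate (Suc n) True @ [False])"
    unfolding has_branch_def bv_L2 bv_R using br2 bv_range by blast
  ultimately show ?thesis using fin k_def by blast
qed

end
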